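(* Let $F$ be an ordered forest with priority forest $P$ and priority traversal $\tau$. Then $\tau^{-1}$ is the Jordan–Hölder permutation of a unique maximal chain of $I_P=[\hat0,P]$.
   Context: $[n]=\{1,\dots,n\}$, $[n]_0=\{0,\dots,n\}$. An ordered $(m,n)$-forest is a rooted forest with $n+1$ nodes and $m$ edges whose component trees $T_0,\dots,T_{n-m}$ are totally ordered, with unlabeled roots marked $\circ,\circ_1,\dots,\circ_{n-m}$, and non-root vertices labeled bijectively by $[m]$. Priority search: initially only the children of $\circ$ are unblocked; at each step visit the unblocked unvisited node with the smallest label and unblock its children; when a tree is exhausted, move to the next tree, visit its root and unblock its children. Steps are numbered $1,\dots,n$ (the visit of $\circ$ is not counted). The priority traversal $\tau$ is the partial permutation $[n]\to[m]$ sending step $i$ to the label of the node visited at step $i$, undefined when that node is a root; $\tau^{-1}:[m]\to[n]$ is its inverse. The priority forest $P$ is obtained by relabeling each node by its visiting step, with $\circ$ labeled $0$. A priority forest on $[n]_0$ is a rooted forest with vertex set $[n]_0$ whose component trees are increasing (each non-root vertex has a larger label than its parent) and such that for $j<k$ every label of the $j$-th tree is smaller than every label of the $k$-th tree. $\Pi(n)$ is the poset of priority forests on $[n]_0$ ordered by inclusion of edge sets, with an extra top element; $\hat0$ is the edgeless forest. For priority forests $Q\lessdot Q'$ (one edge added), $\lambda(Q,Q')$ is the larger endpoint of the edge in $E(Q')\setminus E(Q)$. A maximal chain $\hat0=P_0\lessdot\cdots\lessdot P_m=P$ has Jordan–Hölder permutation $[m]\to[n]$, $i\mapsto\lambda(P_{i-1},P_i)$.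 *)

theory Defs
  imports Main
begin

text \<open>Nodes of an ordered (m,n)-forest: Inl j is the root of the j-th tree T_j
  (Inl 0 is the root marked circ, Inl j the root marked circ_j), and Inr a is the
  non-root vertex labelled a, for a in [m].\<close>

definition parent_rel :: "nat \<Rightarrow> (nat \<Rightarrow> nat + nat) \<Rightarrow> ((nat + nat) \<times> (nat + nat)) set" where
  "parent_rel m par = {(Inr a, par a) | a. a \<in> {1..m}}"

definition ordered_forest :: "nat \<Rightarrow> nat \<Rightarrow> (nat \<Rightarrow> nat + nat) \<Rightarrow> bool" where
  "ordered_forest m n par \<longleftrightarrow>
     m \<le> n \<and>
     (\<forall>a\<in>{1..m}. case par a of Inl j \<Rightarrow> j \<le> n - m | Inr b \<Rightarrow> b \<in> {1..m}) \<and>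
     (\<forall>a\<in>{1..m}. \<exists>j. (Inr a, Inl j) \<in> (parent_rel m par)\<^sup>+)"

definition avail :: "nat \<Rightarrow> (nat \<Rightarrow> nat + nat) \<Rightarrow> (nat + nat) list \<Rightarrow> nat set" where
  "avail m par vs = {a \<in> {1..m}. par a \<in> set vs \<and> Inr a \<notin> set vs}"

text \<open>Next visited node: the unblocked unvisited node with the smallest label, or,
  if the current tree is exhausted, the root of the next tree.\<close>
definition next_visit :: "nat \<Rightarrow> (nat \<Rightarrow> nat + nat) \<Rightarrow> (nat + nat) list \<Rightarrow> nat + nat" where
  "next_visit m par vs =
     (if avail m par vs \<noteq> {} then Inr (Min (avail m par vs))
      else Inl (length (filter isl vs)))"

fun psearch :: "nat \<Rightarrow> (nat \<Rightarrow> nat + nat) \<Rightarrow> nat \<Rightarrow> (nat + nat) list" where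
  "psearch m par 0 = [Inl 0]"
| "psearch m par (Suc k) = psearch m par k @ [next_visit m par (psearch m par k)]"

definition visit :: "nat \<Rightarrow> nat \<Rightarrow> (nat \<Rightarrow> nat + nat) \<Rightarrow> nat \<Rightarrow> nat + nat" where
  "visit m n par i = psearch m par n ! i"

definition step_of :: "nat \<Rightarrow> nat \<Rightarrow> (nat \<Rightarrow> nat + nat) \<Rightarrow> nat + nat \<Rightarrow> nat" where
  "step_of m n par x = (THE i. i \<le> n \<and> visit m n par i = x)"

definition ptrav :: "nat \<Rightarrow> nat \<Rightarrow> (nat \<Rightarrow> nat + nat) \<Rightarrow> nat \<Rightarrow> nat option" where
  "ptrav m n par i = (case visit m n par i of Inr a \<Rightarrow> Some a | Inl _ \<Rightarrow> None)"

definition ptrav_inv :: "nat \<Rightarrow> nat \<Rightarrow> (nat \<Rightarrow> nat + nat) \<Rightarrow> nat \<Rightarrow> nat" where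
  "ptrav_inv m n par a = (THE i. i \<in> {1..n} \<and> ptrav m n par i = Some a)"

definition pforest_of :: "nat \<Rightarrow> nat \<Rightarrow> (nat \<Rightarrow> nat + nat) \<Rightarrow> (nat \<times> nat) set" where
  "pforest_of m n par = {(step_of m n par (par a), step_of m n par (Inr a)) | a. a \<in> {1..m}}"

definition connected_in :: "(nat \<times> nat) set \<Rightarrow> nat \<Rightarrow> nat \<Rightarrow> bool" where
  "connected_in E u v \<longleftrightarrow> (u, v) \<in> (E \<union> E\<inverse>)\<^sup>*"

text \<open>A priority forest on [n]_0, given by its set of edges (parent, child):
  a rooted forest on [n]_0 (every vertex has at most one parent) whose trees are
  increasing, and whose trees can be totally ordered so that all labels of an
  earlier tree are smaller than all labels of a later tree.\<close>
definition priority_forest :: "nat \<Rightarrow> (nat \<times> nat) set \<Rightarrow> bool" where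
  "priority_forest n E \<longleftrightarrow>
     E \<subseteq> {0..n} \<times> {0..n} \<and>
     (\<forall>(p, c) \<in> E. p < c) \<and>
     (\<forall>p p' c. (p, c) \<in> E \<and> (p', c) \<in> E \<longrightarrow> p = p') \<and>
     (\<forall>u\<in>{0..n}. \<forall>v\<in>{0..n}. \<not> connected_in E u v \<longrightarrow>
        (\<forall>x y. connected_in E u x \<and> connected_in E v y \<longrightarrow> x < y) \<or>
        (\<forall>x y. connected_in E u x \<and> connected_in E v y \<longrightarrow> y < x))"

definition pcover :: "nat \<Rightarrow> (nat \<times> nat) set \<Rightarrow> (nat \<times> nat) set \<Rightarrow> bool" where
  "pcover n Q Q' \<longleftrightarrow> priority_forest n Q \<and> priority_forest n Q' \<and>
     Q \<subseteq> Q' \<and> card (Q' - Q) = 1"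

definition plabel :: "(nat \<times> nat) set \<Rightarrow> (nat \<times> nat) set \<Rightarrow> nat" where
  "plabel Q Q' = (let e = (THE e. e \<in> Q' - Q) in max (fst e) (snd e))"

definition max_chain :: "nat \<Rightarrow> (nat \<times> nat) set \<Rightarrow> (nat \<Rightarrow> (nat \<times> nat) set) \<Rightarrow> bool" where
  "max_chain n P ch \<longleftrightarrow> ch 0 = {} \<and> ch (card P) = P \<and>
     (\<forall>i\<in>{1..card P}. pcover n (ch (i - 1)) (ch i))"

definition jh_perm :: "(nat \<Rightarrow> (nat \<times> nat) set) \<Rightarrow> nat \<Rightarrow> nat" where
  "jh_perm ch i = plabel (ch (i - 1)) (ch i)"

end

theory Submission
  imports Defs
begin


lemma conn_refl: "connected_in E u u" by (simp add: connected_in_def)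

lemma conn_sym: "connected_in E u v \<Longrightarrow> connected_in E v u"
  unfolding connected_in_def
  by (metis converse_Un converse_converse rtrancl_converseI sup_commute)

lemma conn_trans: "connected_in E u v \<Longrightarrow> connected_in E v w \<Longrightarrow> connected_in E u w"
  unfolding connected_in_def by (meson rtrancl_trans)

lemma conn_edge: "(p, c) \<in> E \<Longrightarrow> connected_in E p c"
  unfolding connected_in_def by (simp add: r_into_rtrancl)

lemma conn_between:
  assumes lt: "\<forall>(p, c) \<in> E. p < c"
    and iv: "\<forall>(p, c) \<in> E. \<forall>w. p < w \<and> w < c \<longrightarrow> connected_in E w p"
    and xz: "connected_in E x z"
  shows "min x z \<le> w \<Longrightarrow> w \<le> max x z \<Longrightarrow> connected_in E x w"
  using xz[unfolded connected_in_def]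
proof (induction z arbitrary: w rule: rtrancl_induct)
  case base
  then show ?case by (simp add: conn_refl)
next
  case (step z z')
  have xz: "connected_in E x z" using step.hyps(1) by (simp add: connected_in_def)
  have xz': "connected_in E x z'"
    using rtrancl_into_rtrancl[OF step.hyps(1) step.hyps(2)] by (simp add: connected_in_def)
  show ?case
  proof (cases "min x z \<le> w \<and> w \<le> max x z")
    case True then show ?thesis using step.IH by blast
  next
    case False
    have edge: "(z, z') \<in> E \<or> (z', z) \<in> E" using step.hyps(2) by auto
    show ?thesis
    proof (cases "w = z \<or> w = z'")
      case True then show ?thesis using xz xz' by blast
    next
      case False2: False
      show ?thesis using edge
      proof
        assume e: "(z, z') \<in> E"
        then have "z < z'" using lt by auto
        then have "z < w \<and> w < z'" using False False2 step.prems by auto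
        then have "connected_in E w z" using iv e by blast
        then show ?thesis using xz conn_sym conn_trans by blast
      next
        assume e: "(z', z) \<in> E"
        then have "z' < z" using lt by auto
        then have "z' < w \<and> w < z" using False False2 step.prems by auto
        then have "connected_in E w z'" using iv e by blast
        then show ?thesis using xz' conn_sym conn_trans by blast
      qed
    qed
  qed
qed

lemma sep:
  assumes lt: "\<forall>(p, c) \<in> E. p < c"
    and iv: "\<forall>(p, c) \<in> E. \<forall>w. p < w \<and> w < c \<longrightarrow> connected_in E w p"
    and nc: "\<not> connected_in E u v" and uv: "u < v"
    and ux: "connected_in E u x" and vy: "connected_in E v y"
  shows "x < y"
proof (rule ccontr)
  assume "\<not> x < y"
  then have yx: "y \<le> x" by simp
  show False
  proof (cases "v \<le> x")
    case True
    then have "connected_in E u v" using conn_between[OF lt iv ux, of v] uv by simp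
    then show False using nc by simp
  next
    case False
    have yv: "connected_in E y v" using vy conn_sym by blast
    have "connected_in E y x" using conn_between[OF lt iv yv, of x] yx False by simp
    then have "connected_in E u v" using ux yv conn_sym conn_trans by blast
    then show False using nc by simp
  qed
qed

lemma pf_intro:
  assumes sub: "E \<subseteq> {0..n} \<times> {0..n}"
    and lt: "\<forall>(p, c) \<in> E. p < c"
    and up: "\<forall>p p' c. (p, c) \<in> E \<and> (p', c) \<in> E \<longrightarrow> p = p'"
    and iv: "\<forall>(p, c) \<in> E. \<forall>w. p < w \<and> w < c \<longrightarrow> connected_in E w p"
  shows "priority_forest n E"
  unfolding priority_forest_def
proof (intro conjI sub lt up ballI impI)
  fix u v assume nc: "\<not> connected_in E u v"
  have "u \<noteq> v" using nc conn_refl by metis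
  then consider "u < v" | "v < u" by linarith
  then show "(\<forall>x y. connected_in E u x \<and> connected_in E v y \<longrightarrow> x < y) \<or>
        (\<forall>x y. connected_in E u x \<and> connected_in E v y \<longrightarrow> y < x)"
  proof cases
    case 1 then show ?thesis using sep[OF lt iv nc] by blast
  next
    case 2
    have nc': "\<not> connected_in E v u" using nc conn_sym by blast
    then show ?thesis using sep[OF lt iv nc' 2] by blast
  qed
qed

lemma plabel_single: "Q' - Q = {d} \<Longrightarrow> plabel Q Q' = max (fst d) (snd d)"
  unfolding plabel_def by simp



lemma psearch_length: "length (psearch m par k) = Suc k"
  by (induction k) auto

lemma psearch_prefix: "k \<le> k' \<Longrightarrow> take (Suc k) (psearch m par k') = psearch m par k"
proof (induction k')
  case 0 then show ?case by simp
next
  case (Suc k')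
  show ?case
  proof (cases "k = Suc k'")
    case True then show ?thesis using psearch_length[of m par "Suc k'"] by simp
  next
    case False
    then have "k \<le> k'" using Suc.prems by simp
    then show ?thesis using Suc.IH psearch_length[of m par k'] by simp
  qed
qed

lemma trancl_closed:
  assumes "(x, y) \<in> (parent_rel m par)\<^sup>+" "y \<in> S"
    "\<forall>a\<in>{1..m}. par a \<in> S \<longrightarrow> Inr a \<in> S"
  shows "x \<in> S"
  using assms
proof (induction rule: trancl_induct)
  case (base y) then show ?case by (auto simp: parent_rel_def)
next
  case (step y z) then show ?case by (auto simp: parent_rel_def)
qed

locale OF =
  fixes m n :: nat and par :: "nat \<Rightarrow> nat + nat"
  assumes of: "ordered_forest m n par"
begin

definition V :: "(nat + nat) set" where "V = Inl ` {0..n-m} \<union> Inr ` {1..m}"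

lemma m_le: "m \<le> n" using of by (simp add: ordered_forest_def)

lemma finite_V: "finite V" by (simp add: V_def)

lemma card_V: "card V = Suc n"
proof -
  have "card V = card (Inl ` {0..n-m} :: (nat+nat) set) + card (Inr ` {1..m} :: (nat+nat) set)"
    unfolding V_def by (rule card_Un_disjoint) auto
  also have "\<dots> = Suc (n - m) + m" by (simp add: card_image)
  finally show ?thesis using m_le by simp
qed

lemma of2: "\<forall>a\<in>{1..m}. case par a of Inl j \<Rightarrow> j \<le> n - m | Inr b \<Rightarrow> b \<in> {1..m}"
  using conjunct1[OF conjunct2[OF of[unfolded ordered_forest_def]]] .

lemma of3: "\<forall>a\<in>{1..m}. \<exists>j. (Inr a, Inl j) \<in> (parent_rel m par)\<^sup>+"
  using conjunct2[OF conjunct2[OF of[unfolded ordered_forest_def]]] .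

lemma par_V: assumes a: "a \<in> {1..m}" shows "par a \<in> V"
proof -
  have c: "case par a of Inl j \<Rightarrow> j \<le> n - m | Inr b \<Rightarrow> b \<in> {1..m}" using of2 a by (rule bspec)
  show ?thesis
  proof (cases "par a")
    case (Inl j) then show ?thesis using c by (simp add: V_def)
  next
    case (Inr b) then show ?thesis using c by (simp add: V_def)
  qed
qed

lemma all_reach: "a \<in> {1..m} \<Longrightarrow> \<exists>j. (Inr a, Inl j) \<in> (parent_rel m par)\<^sup>+"
  using of3 by (rule bspec)

lemma inv: "k \<le> n \<Longrightarrow> distinct (psearch m par k) \<and> set (psearch m par k) \<subseteq> V \<and>
   {j. Inl j \<in> set (psearch m par k)} = {..<length (filter isl (psearch m par k))}"
proof (induction k)
  case 0 then show ?case by (auto simp: V_def)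
next
  case (Suc k)
  define S where "S = psearch m par k"
  define c where "c = length (filter isl S)"
  have kn: "k \<le> n" using Suc.prems by simp
  have IH0: "distinct S \<and> set S \<subseteq> V \<and> {j. Inl j \<in> set S} = {..<c}"
    unfolding S_def c_def by (rule Suc.IH[OF kn])
  then have IH: "distinct S" "set S \<subseteq> V" "{j. Inl j \<in> set S} = {..<c}" by blast+
  have lenS: "length S = Suc k" by (simp add: S_def psearch_length)
  have eqS: "psearch m par (Suc k) = S @ [next_visit m par S]" by (simp add: S_def)
  show ?case
  proof (cases "avail m par S = {}")
    case False
    define b where "b = Min (avail m par S)"
    have fin: "finite (avail m par S)" by (simp add: avail_def)
    have "b \<in> avail m par S" using Min_in[OF fin False] by (simp add: b_def)
    then have b: "b \<in> {1..m}" "Inr b \<notin> set S" by (auto simp: avail_def)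
    have nv: "next_visit m par S = Inr b" using False by (simp add: next_visit_def b_def)
    have "{j. Inl j \<in> set (S @ [Inr b])} = {j. Inl j \<in> set S}" by auto
    moreover have "filter isl (S @ [Inr b]) = filter isl S" by simp
    moreover have "set (S @ [Inr b]) \<subseteq> V" using IH(2) b(1) by (auto simp: V_def)
    moreover have "distinct (S @ [Inr b])" using IH(1) b(2) by simp
    ultimately show ?thesis using IH(3) unfolding eqS nv c_def by simp
  next
    case True
    have nv: "next_visit m par S = Inl c" using True by (simp add: next_visit_def c_def)
    have cnot: "Inl c \<notin> set S"
    proof
      assume "Inl c \<in> set S"
      then have "c \<in> {j. Inl j \<in> set S}" by simp
      then show False unfolding IH(3) by simp
    qed
    have cle: "c \<le> n - m"
    proof (rule ccontr)
      assume "\<not> c \<le> n - m"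
      then have roots: "Inl j \<in> set S" if "j \<le> n - m" for j
      proof -
        have "j \<in> {..<c}" using that \<open>\<not> c \<le> n - m\<close> by simp
        then have "j \<in> {j. Inl j \<in> set S}" unfolding IH(3) .
        then show ?thesis by simp
      qed
      have clo: "\<forall>a\<in>{1..m}. par a \<in> set S \<longrightarrow> Inr a \<in> set S"
        using True by (auto simp: avail_def)
      have "Inr a \<in> set S" if aa: "a \<in> {1..m}" for a
      proof -
        obtain j where j: "(Inr a, Inl j) \<in> (parent_rel m par)\<^sup>+" using all_reach[OF aa] by blast
        have "Inl j \<in> V"
        proof -
          obtain y where "(y, Inl j) \<in> parent_rel m par" using tranclD2[OF j] by blast
          then obtain a' where "a' \<in> {1..m}" "par a' = Inl j" by (auto simp: parent_rel_def)
          then show ?thesis using par_V by metis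
        qed
        then have "Inl j \<in> set S" using roots by (auto simp: V_def)
        then show ?thesis using trancl_closed[OF j _ clo] by blast
      qed
      then have "V \<subseteq> set S" using roots by (auto simp: V_def)
      then have "card V \<le> card (set S)" by (simp add: card_mono)
      also have "\<dots> = Suc k" using IH(1) lenS by (simp add: distinct_card)
      finally show False using Suc.prems card_V by simp
    qed
    have "{j. Inl j \<in> set (S @ [Inl c])} = insert c {j. Inl j \<in> set S}" by auto
    also have "\<dots> = {..<Suc c}" unfolding IH(3) using lessThan_Suc by simp
    finally have A: "{j. Inl j \<in> set (S @ [Inl c])} = {..<length (filter isl (S @ [Inl c]))}"
      by (simp add: c_def)
    moreover have "set (S @ [Inl c]) \<subseteq> V" using IH(2) cle by (auto simp: V_def)
    moreover have "distinct (S @ [Inl c])" using IH(1) cnot by simp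
    ultimately show ?thesis unfolding eqS nv by blast
  qed
qed

end


context OF begin

abbreviation L where "L \<equiv> psearch m par n"
abbreviation st where "st \<equiv> step_of m n par"

lemma L_len: "length L = Suc n" by (simp add: psearch_length)
lemma L_dist: "distinct L" using inv[of n] by simp
lemma L_set: "set L = V"
proof (rule card_subset_eq[OF finite_V])
  show "set L \<subseteq> V" using inv[of n] by simp
  show "card (set L) = card V" using L_dist L_len card_V by (simp add: distinct_card)
qed

lemma take_L: "i \<le> n \<Longrightarrow> psearch m par i = take (Suc i) L"
  using psearch_prefix[of i n m par] by simp

lemma L0: "L ! 0 = Inl 0"
proof -
  have "take 1 L = [Inl 0]" using take_L[of 0] by simp
  then have "take 1 L ! 0 = Inl 0" by simp
  then show ?thesis by simp
qed

lemma L_next: assumes "1 \<le> i" "i \<le> n" shows "L ! i = next_visit m par (take i L)"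
proof -
  obtain k where k: "i = Suc k" using assms(1) by (cases i) auto
  have pk: "psearch m par k = take i L" using take_L[of k] assms(2) k by simp
  have "take (Suc i) L = psearch m par i" using take_L[OF assms(2)] by simp
  also have "\<dots> = psearch m par k @ [next_visit m par (psearch m par k)]" unfolding k by simp
  also have "\<dots> = take i L @ [next_visit m par (take i L)]" unfolding pk ..
  finally have A: "take (Suc i) L = take i L @ [next_visit m par (take i L)]" .
  have li: "length (take i L) = i" using L_len assms(2) by simp
  have "(take i L @ [next_visit m par (take i L)]) ! length (take i L) = next_visit m par (take i L)"
    by (rule nth_append_length)
  then have "(take i L @ [next_visit m par (take i L)]) ! i = next_visit m par (take i L)"
    unfolding li .
  then have "take (Suc i) L ! i = next_visit m par (take i L)" unfolding A .
  then show ?thesis by simp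
qed

lemma st_nth: assumes "t \<le> n" shows "st (L ! t) = t"
  unfolding step_of_def visit_def
proof (rule the_equality)
  show "t \<le> n \<and> L ! t = L ! t" using assms by simp
  fix i assume "i \<le> n \<and> L ! i = L ! t"
  then show "i = t" using L_dist L_len assms nth_eq_iff_index_eq by fastforce
qed

lemma st_V: assumes "x \<in> V" shows "st x \<le> n" "L ! st x = x"
proof -
  have "x \<in> set L" using assms L_set by simp
  then obtain t where t: "t < length L" "L ! t = x" by (auto simp: in_set_conv_nth)
  then have "st x = t" using st_nth L_len by fastforce
  then show "st x \<le> n" "L ! st x = x" using t L_len by auto
qed

lemma st_inj: assumes "x \<in> V" "y \<in> V" "st x = st y" shows "x = y"
proof -
  have "x = L ! st x" using st_V(2)[OF assms(1)] by simp
  also have "\<dots> = L ! st y" using assms(3) by simp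
  also have "\<dots> = y" using st_V(2)[OF assms(2)] by simp
  finally show ?thesis .
qed

lemma in_take: assumes "x \<in> V" "i \<le> Suc n" shows "x \<in> set (take i L) \<longleftrightarrow> st x < i"
proof
  assume "x \<in> set (take i L)"
  then obtain t where t: "t < length (take i L)" "take i L ! t = x" by (auto simp: in_set_conv_nth)
  then have ti: "t < i" "L ! t = x" "t \<le> n" using L_len by auto
  have "st x = t" using st_nth[OF ti(3)] ti(2) by simp
  then show "st x < i" using ti(1) by simp
next
  assume "st x < i"
  then have "take i L ! st x = x" using st_V[OF assms(1)] by simp
  moreover have "st x < length (take i L)" using \<open>st x < i\<close> assms L_len by simp
  ultimately have "take i L ! st x \<in> set (take i L)" using nth_mem by blast
  then show "x \<in> set (take i L)" using \<open>take i L ! st x = x\<close> by simp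
qed

lemma Inr_V: "a \<in> {1..m} \<Longrightarrow> Inr a \<in> V" by (simp add: V_def)

lemma par_before: assumes a: "a \<in> {1..m}" shows "st (par a) < st (Inr a)"
proof -
  define s where "s = st (Inr a)"
  have s: "s \<le> n" "L ! s = Inr a" using st_V[OF Inr_V[OF a]] by (auto simp: s_def)
  have "s \<noteq> 0"
  proof
    assume "s = 0" then show False using s L0 by simp
  qed
  then have nv: "next_visit m par (take s L) = Inr a" using L_next[of s] s by simp
  then have ne: "avail m par (take s L) \<noteq> {}" unfolding next_visit_def by (auto split: if_splits)
  then have "a = Min (avail m par (take s L))" using nv unfolding next_visit_def by simp
  then have "a \<in> avail m par (take s L)" using ne Min_in[of "avail m par (take s L)"]
    by (simp add: avail_def)
  then have "par a \<in> set (take s L)" by (simp add: avail_def)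
  then show ?thesis using in_take[OF par_V[OF a], of s] s by (simp add: s_def)
qed

lemma ptrav_inv_eq: assumes a: "a \<in> {1..m}" shows "ptrav_inv m n par a = st (Inr a)"
  unfolding ptrav_inv_def
proof (rule the_equality)
  have s: "st (Inr a) \<le> n" "L ! st (Inr a) = Inr a" using st_V[OF Inr_V[OF a]] by auto
  have "st (Inr a) \<noteq> 0"
  proof
    assume "st (Inr a) = 0" then show False using s L0 by simp
  qed
  then show "st (Inr a) \<in> {1..n} \<and> ptrav m n par (st (Inr a)) = Some a"
    using s by (simp add: ptrav_def visit_def)
  fix i assume i: "i \<in> {1..n} \<and> ptrav m n par i = Some a"
  then have "L ! i = Inr a" by (simp add: ptrav_def visit_def split: sum.splits)
  then show "i = st (Inr a)" using st_nth i by force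
qed

definition e :: "nat \<Rightarrow> nat \<times> nat" where "e j = (st (par j), st (Inr j))"

lemma P_eq: "pforest_of m n par = e ` {1..m}"
  unfolding pforest_of_def e_def by auto

lemma e_inj: "inj_on e {1..m}"
proof
  fix a b assume "a \<in> {1..m}" "b \<in> {1..m}" "e a = e b"
  then have "Inr a = (Inr b :: nat + nat)" using st_inj[OF Inr_V Inr_V] by (simp add: e_def)
  then show "a = b" by simp
qed

lemma card_P: "card (pforest_of m n par) = m"
  using e_inj P_eq by (simp add: card_image)

lemma avail_iff: assumes "w \<le> n" "j \<in> {1..m}"
  shows "j \<in> avail m par (take w L) \<longleftrightarrow> st (par j) < w \<and> w \<le> st (Inr j)"
  using in_take[OF par_V[OF assms(2)], of w] in_take[OF Inr_V[OF assms(2)], of w] assms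
  by (auto simp: avail_def)

lemma interval:
  assumes "i \<le> m"
  shows "j \<in> {1..i} \<Longrightarrow> st (par j) < w \<Longrightarrow> w < st (Inr j) \<Longrightarrow>
     connected_in (e ` {1..i}) w (st (par j))"
proof (induction w arbitrary: j rule: less_induct)
  case (less w)
  define E where "E = e ` {1..i}"
  have j: "j \<in> {1..m}" using less.prems assms by auto
  have wn: "w \<le> n" using less.prems st_V[OF Inr_V[OF j]] by simp
  have w1: "1 \<le> w" using less.prems by simp
  define A where "A = avail m par (take w L)"
  have jA: "j \<in> A" using avail_iff[OF wn j] less.prems by (simp add: A_def)
  have finA: "finite A" by (simp add: A_def avail_def)
  define b where "b = Min A"
  have bA: "b \<in> A" using Min_in[OF finA] jA by (auto simp: b_def)
  have bj: "b \<le> j" using Min_le[OF finA jA] by (simp add: b_def)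
  have b: "b \<in> {1..m}" using bA by (simp add: A_def avail_def)
  have Lw: "L ! w = Inr b" using L_next[OF w1 wn] jA by (auto simp: next_visit_def A_def b_def)
  have stb: "st (Inr b) = w" using st_nth[OF wn] Lw by simp
  have "b \<noteq> j" using stb less.prems by auto
  then have bi: "b \<in> {1..i}" using bj less.prems b by auto
  define q where "q = st (par b)"
  have qw: "q < w" using avail_iff[OF wn b] bA by (simp add: A_def q_def)
  have eb: "e b = (q, w)" by (simp add: e_def q_def stb)
  have wq: "connected_in E w q" using conn_edge[of q w E] eb bi conn_sym by (force simp: E_def)
  consider "q = st (par j)" | "st (par j) < q" | "q < st (par j)" by linarith
  then show ?case
  proof cases
    case 1 then show ?thesis using wq E_def by simp
  next
    case 2
    have "connected_in E q (st (par j))"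
      using less.IH[OF qw less.prems(1) 2] less.prems qw by (simp add: E_def)
    then show ?thesis using wq conn_trans E_def by blast
  next
    case 3
    have "st (par b) < st (par j)" using 3 by (simp add: q_def)
    moreover have "st (par j) < st (Inr b)" using stb less.prems(2) by simp
    ultimately have "connected_in (e ` {1..i}) (st (par j)) (st (par b))"
      using less.IH[OF less.prems(2) bi] by blast
    then have "connected_in E (st (par j)) q" by (simp add: q_def E_def)
    then show ?thesis using wq conn_trans conn_sym E_def by blast
  qed
qed

end
context OF begin

lemma e_le: assumes j: "j \<in> {1..m}" shows "fst (e j) \<le> n \<and> snd (e j) \<le> n"
proof -
  have "st (par j) \<le> n" by (rule st_V(1)[OF par_V[OF j]])
  moreover have "st (Inr j) \<le> n" by (rule st_V(1)[OF Inr_V[OF j]])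
  ultimately show ?thesis unfolding e_def by simp
qed

lemma e_lt: assumes j: "j \<in> {1..m}" shows "fst (e j) < snd (e j)"
  unfolding e_def fst_conv snd_conv by (rule par_before[OF j])

lemma e_snd_inj: assumes j: "j \<in> {1..m}" and j': "j' \<in> {1..m}" and eq: "snd (e j) = snd (e j')"
  shows "j = j'"
proof -
  have "st (Inr j) = st (Inr j')" using eq unfolding e_def by simp
  then have "(Inr j :: nat + nat) = Inr j'" by (rule st_inj[OF Inr_V[OF j] Inr_V[OF j']])
  then show ?thesis by simp
qed

lemma ch_pf: assumes k: "k \<le> m" shows "priority_forest n (e ` {1..k})"
proof (rule pf_intro)
  show "e ` {1..k} \<subseteq> {0..n} \<times> {0..n}"
  proof
    fix x assume "x \<in> e ` {1..k}"
    then obtain j where j0: "j \<in> {1..k}" "x = e j" by auto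
    then have "j \<in> {1..m}" "x = e j" using k by auto
    then show "x \<in> {0..n} \<times> {0..n}" using e_le[of j] by (simp add: mem_Times_iff)
  qed
  show "\<forall>(p, c)\<in>e ` {1..k}. p < c"
  proof
    fix x assume "x \<in> e ` {1..k}"
    then obtain j where j0: "j \<in> {1..k}" "x = e j" by auto
    then have "j \<in> {1..m}" "x = e j" using k by auto
    then show "case x of (p, c) \<Rightarrow> p < c" using e_lt[of j] by (simp add: case_prod_beta)
  qed
  show "\<forall>p p' c. (p, c) \<in> e ` {1..k} \<and> (p', c) \<in> e ` {1..k} \<longrightarrow> p = p'"
  proof (intro allI impI)
    fix p p' c assume "(p, c) \<in> e ` {1..k} \<and> (p', c) \<in> e ` {1..k}"
    then obtain j j' where jj: "j \<in> {1..k}" "j' \<in> {1..k}" "(p, c) = e j" "(p', c) = e j'"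
      by blast
    then have jm: "j \<in> {1..m}" "j' \<in> {1..m}" using k by auto
    have "snd (e j) = snd (e j')" using jj(3,4) by (metis snd_conv)
    then have "j = j'" using e_snd_inj[OF jm] by blast
    then show "p = p'" using jj(3,4) by (metis fst_conv)
  qed
  show "\<forall>(p, c)\<in>e ` {1..k}. \<forall>w. p < w \<and> w < c \<longrightarrow> connected_in (e ` {1..k}) w p"
  proof
    fix x assume "x \<in> e ` {1..k}"
    then obtain j where j: "j \<in> {1..k}" "x = e j" by auto
    show "case x of (p, c) \<Rightarrow> \<forall>w. p < w \<and> w < c \<longrightarrow> connected_in (e ` {1..k}) w p"
      using interval[OF k j(1)] j(2) by (simp add: e_def)
  qed
qed

lemma ediff: assumes k: "k \<in> {1..m}" shows "e ` {1..k} - e ` {1..k-1} = {e k}"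
proof -
  have k1: "1 \<le> k" "k \<le> m" using k by simp_all
  have ins: "{1..k} = insert k {1..k-1}" using k1(1) by (auto simp: atLeastAtMost_iff)
  have nin: "e k \<notin> e ` {1..k-1}"
  proof
    assume "e k \<in> e ` {1..k-1}"
    then obtain j where ej: "e k = e j" and j: "j \<in> {1..k-1}" by (rule imageE)
    have j1: "1 \<le> j \<and> j \<le> k - 1" using j by (simp only: atLeastAtMost_iff)
    have "j \<le> m" using j1 k1(2) by arith
    then have jm: "j \<in> {1..m}" using j1 by (simp only: atLeastAtMost_iff)
    have "snd (e k) = snd (e j)" using ej by (rule arg_cong)
    then have "k = j" by (rule e_snd_inj[OF k jm])
    then show False using j1 k1(1) by arith
  qed
  have E: "e ` {1..k} = insert (e k) (e ` {1..k-1})" unfolding ins by (rule image_insert)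
  show ?thesis unfolding E using nin by (simp add: insert_Diff_if)
qed

lemma existence:
  "max_chain n (pforest_of m n par) (\<lambda>k. e ` {1..k}) \<and>
   (\<forall>i\<in>{1..m}. jh_perm (\<lambda>k. e ` {1..k}) i = ptrav_inv m n par i)"
proof (intro conjI ballI)
  show "max_chain n (pforest_of m n par) (\<lambda>k. e ` {1..k})"
    unfolding max_chain_def card_P
  proof (intro conjI ballI)
    show "e ` {1..0} = {}" by simp
    show "e ` {1..m} = pforest_of m n par" using P_eq by simp
    fix i assume i: "i \<in> {1..m}"
    show "pcover n (e ` {1..i - 1}) (e ` {1..i})"
      unfolding pcover_def
    proof (intro conjI)
      show "priority_forest n (e ` {1..i})" using ch_pf[of i] i by simp
      have "i - 1 \<le> m" using i by auto
      then show "priority_forest n (e ` {1..i - 1})" by (rule ch_pf)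
      show "e ` {1..i - 1} \<subseteq> e ` {1..i}" by (intro image_mono) simp
      show "card (e ` {1..i} - e ` {1..i - 1}) = 1" using ediff[OF i] by simp
    qed
  qed
  fix i assume i: "i \<in> {1..m}"
  have "jh_perm (\<lambda>k. e ` {1..k}) i = max (fst (e i)) (snd (e i))"
    unfolding jh_perm_def using plabel_single[OF ediff[OF i]] by simp
  also have "\<dots> = st (Inr i)" using e_lt[OF i] by (simp add: e_def)
  also have "\<dots> = ptrav_inv m n par i" using ptrav_inv_eq[OF i] by simp
  finally show "jh_perm (\<lambda>k. e ` {1..k}) i = ptrav_inv m n par i" .
qed

lemma uniqueness:
  assumes mc: "max_chain n (pforest_of m n par) ch"
    and jh: "\<forall>i\<in>{1..m}. jh_perm ch i = ptrav_inv m n par i"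
  shows "k \<le> m \<Longrightarrow> ch k = e ` {1..k}"
proof -
  have mc': "ch 0 = {} \<and> ch (card (pforest_of m n par)) = pforest_of m n par \<and>
     (\<forall>i\<in>{1..card (pforest_of m n par)}. pcover n (ch (i - 1)) (ch i))"
    using mc unfolding max_chain_def .
  note mc2 = mc'[unfolded card_P, unfolded P_eq]
  have ch0: "ch 0 = {}" using mc' by blast
  have chm: "ch m = e ` {1..m}" using mc2 by (elim conjE)
  have cov: "pcover n (ch (i - 1)) (ch i)" if "i \<in> {1..m}" for i
  proof -
    have "\<forall>i\<in>{1..m}. pcover n (ch (i - 1)) (ch i)" using mc2 by (elim conjE)
    then show ?thesis using that by (rule bspec)
  qed
  have sub: "ch (m - d) \<subseteq> e ` {1..m}" if "d \<le> m" for d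
    using that
  proof (induction d)
    case 0 then show ?case using chm by simp
  next
    case (Suc d)
    have dm: "d \<le> m" using Suc.prems by simp
    have md: "m - d \<in> {1..m}" using Suc.prems by auto
    have "ch (m - d - 1) \<subseteq> ch (m - d)" using cov[OF md] by (simp add: pcover_def)
    moreover have "m - d - 1 = m - Suc d" by simp
    ultimately have "ch (m - Suc d) \<subseteq> ch (m - d)" by simp
    then show ?case using Suc.IH[OF dm] by (rule subset_trans)
  qed
  have subk: "ch k \<subseteq> e ` {1..m}" if "k \<le> m" for k
  proof -
    have "ch (m - (m - k)) \<subseteq> e ` {1..m}" by (rule sub) simp
    moreover have "m - (m - k) = k" using that by simp
    ultimately show ?thesis by simp
  qed
  show "k \<le> m \<Longrightarrow> ch k = e ` {1..k}"
  proof (induction k)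
    case 0 then show ?case using ch0 by simp
  next
    case (Suc k)
    have km: "k \<le> m" using Suc.prems by simp
    have sk: "Suc k \<in> {1..m}" using Suc.prems by simp
    have pc: "pcover n (ch k) (ch (Suc k))" using cov[OF sk] by simp
    then have "card (ch (Suc k) - ch k) = 1" by (simp add: pcover_def)
    then obtain d where d: "ch (Suc k) - ch k = {d}" by (rule card_1_singletonE)
    have "d \<in> ch (Suc k) - ch k" using d by simp
    then have dS: "d \<in> ch (Suc k)" by simp
    have "d \<in> e ` {1..m}" using subk[OF Suc.prems] dS by (rule subsetD)
    then obtain j where dj: "d = e j" and j: "j \<in> {1..m}" by (rule imageE)
    have "jh_perm ch (Suc k) = max (fst d) (snd d)"
      unfolding jh_perm_def using plabel_single[OF d] by simp
    also have "\<dots> = snd (e j)" using e_lt[OF j] dj by simp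
    finally have A: "jh_perm ch (Suc k) = snd (e j)" .
    have "jh_perm ch (Suc k) = ptrav_inv m n par (Suc k)" using jh sk by (rule bspec)
    also have "\<dots> = snd (e (Suc k))" using ptrav_inv_eq[OF sk] by (simp add: e_def)
    finally have "snd (e j) = snd (e (Suc k))" using A by simp
    then have "j = Suc k" by (rule e_snd_inj[OF j sk])
    then have dd: "d = e (Suc k)" using dj by simp
    have sub': "ch k \<subseteq> ch (Suc k)" using pc by (simp add: pcover_def)
    have "insert d (ch k) = (ch (Suc k) - ch k) \<union> ch k" using d by simp
    also have "\<dots> = ch (Suc k)" using sub' by auto
    finally have "ch (Suc k) = insert (e (Suc k)) (ch k)" using dd by simp
    also have "\<dots> = insert (e (Suc k)) (e ` {1..k})" using Suc.IH[OF km] by simp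
    also have "\<dots> = e ` (insert (Suc k) {1..k})" by simp
    also have "\<dots> = e ` {1..Suc k}"
    proof -
      have "insert (Suc k) {1..k} = {1..Suc k}" by auto
      then show ?thesis by simp
    qed
    finally show ?case .
  qed
qed

end

theorem lemma3p3:
  fixes m n :: nat and par :: "nat \<Rightarrow> nat + nat"
  assumes "ordered_forest m n par"
  shows "(\<exists>ch. max_chain n (pforest_of m n par) ch \<and>
            (\<forall>i\<in>{1..m}. jh_perm ch i = ptrav_inv m n par i)) \<and>
         (\<forall>ch ch'. max_chain n (pforest_of m n par) ch \<and>
            (\<forall>i\<in>{1..m}. jh_perm ch i = ptrav_inv m n par i) \<and>
            max_chain n (pforest_of m n par) ch' \<and>
            (\<forall>i\<in>{1..m}. jh_perm ch' i = ptrav_inv m n par i) \<longrightarrow>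
            (\<forall>i\<le>m. ch i = ch' i))"
proof -
  interpret OF m n par by (rule OF.intro) (rule assms)
  have E: "\<exists>ch. max_chain n (pforest_of m n par) ch \<and>
            (\<forall>i\<in>{1..m}. jh_perm ch i = ptrav_inv m n par i)"
    using existence by (rule exI[where x="\<lambda>k. e ` {1..k}"])
  have U: "\<forall>ch ch'. max_chain n (pforest_of m n par) ch \<and>
            (\<forall>i\<in>{1..m}. jh_perm ch i = ptrav_inv m n par i) \<and>
            max_chain n (pforest_of m n par) ch' \<and>
            (\<forall>i\<in>{1..m}. jh_perm ch' i = ptrav_inv m n par i) \<longrightarrow>
            (\<forall>i\<le>m. ch i = ch' i)"
  proof (intro allI impI)
    fix ch ch' i
    assume H: "max_chain n (pforest_of m n par) ch \<and>
            (\<forall>i\<in>{1..m}. jh_perm ch i = ptrav_inv m n par i) \<and>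
            max_chain n (pforest_of m n par) ch' \<and>
            (\<forall>i\<in>{1..m}. jh_perm ch' i = ptrav_inv m n par i)"
      and im: "i \<le> m"
    have mc: "max_chain n (pforest_of m n par) ch" using H by (rule conjunct1)
    have jh: "\<forall>i\<in>{1..m}. jh_perm ch i = ptrav_inv m n par i"
      using H by (rule conjunct1[OF conjunct2])
    have mc': "max_chain n (pforest_of m n par) ch'"
      using H by (rule conjunct1[OF conjunct2[OF conjunct2]])
    have jh': "\<forall>i\<in>{1..m}. jh_perm ch' i = ptrav_inv m n par i"
      using H by (rule conjunct2[OF conjunct2[OF conjunct2]])
    have "ch i = e ` {1..i}" by (rule uniqueness[OF mc jh im])
    moreover have "ch' i = e ` {1..i}" by (rule uniqueness[OF mc' jh' im])
    ultimately show "ch i = ch' i" by simp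
  qed
  from E U show ?thesis by (rule conjI)
qed

end
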